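(* Let $p$ be one of $(123,\emptyset,\{0\})$, $(123,\{0\},\{2\})$, $(132,\emptyset,\{0\})$, $(132,\{0\},\{2\})$, or any pattern in the same symmetry class as one of these. Then for all $n\ge1$, \[a_n(p)=\sum_{k=0}^{n-1}\frac{(n-1)!}{k!}.\]
   Context: For $n\ge1$, $\mathcal S_n$ is the set of permutations $\pi=\pi_1\cdots\pi_n$ of $[n]$. A bi-vincular pattern of length $k$ is a triple $p=(\sigma,X,Y)$ with $\sigma\in\mathcal S_k$ and $X,Y\subseteq\{0,1,\dots,k\}$. A permutation $\pi\in\mathcal S_n$ contains $p$ if there are indices $1\le i_1<\dots<i_k\le n$ such that $(\pi_{i_1},\dots,\pi_{i_k})$ is order-isomorphic to $\sigma$ and, letting $j_1<\dots<j_k$ be the values $\pi_{i_1},\dots,\pi_{i_k}$ sorted increasingly and setting $i_0=j_0=0$, $i_{k+1}=j_{k+1}=n+1$, one has $i_{x+1}=i_x+1$ for all $x\in X$ and $j_{y+1}=j_y+1$ for all $y\in Y$. Otherwise $\pi$ avoids $p$; $a_n(p)$ is the number of $\pi\in\mathcal S_n$ avoiding $p$. Symmetries: $p^{i}=(\sigma^{-1},Y,X)$, $p^{r}=(\sigma^{r},\{k-x:x\in X\},Y)$, $p^{c}=(\sigma^{c},X,\{k-y:y\in Y\})$ with $\sigma^r_j=\sigma_{k+1-j}$, $\sigma^c_j=k+1-\sigma_j$; the symmetry class of $p$ consists of all patterns obtained from $p$ by finitely many applications of these maps. *)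

theory Defs
  imports Complex_Main
begin

text \<open>Permutations of [n] as lists pi = [pi_1, ..., pi_n] (list index i-1 holds pi_i).\<close>
definition perms :: "nat \<Rightarrow> nat list set" where
  "perms n = {\<pi>. length \<pi> = n \<and> distinct \<pi> \<and> set \<pi> = {1..n}}"

type_synonym bvpat = "nat list \<times> nat set \<times> nat set"

definition is_bvpat :: "bvpat \<Rightarrow> bool" where
  "is_bvpat p = (case p of (\<sigma>, X, Y) \<Rightarrow>
     \<sigma> \<in> perms (length \<sigma>) \<and> X \<subseteq> {0..length \<sigma>} \<and> Y \<subseteq> {0..length \<sigma>})"

text \<open>Containment. The list ii holds the indices i_1 < ... < i_k (1-based positions);
  I = [i_0, i_1, ..., i_k, i_{k+1}] and J = [j_0, j_1, ..., j_k, j_{k+1}] with the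
  sorted values j_1 < ... < j_k.\<close>
definition contains :: "nat list \<Rightarrow> bvpat \<Rightarrow> bool" where
  "contains \<pi> p = (case p of (\<sigma>, X, Y) \<Rightarrow>
     (\<exists>ii. length ii = length \<sigma> \<and> sorted_wrt (<) ii \<and> set ii \<subseteq> {1..length \<pi>} \<and>
        (let vals = map (\<lambda>i. \<pi> ! (i - 1)) ii;
             js = sort vals;
             I = [0] @ ii @ [length \<pi> + 1];
             J = [0] @ js @ [length \<pi> + 1]
         in (\<forall>a < length \<sigma>. \<forall>b < length \<sigma>. (vals ! a < vals ! b \<longleftrightarrow> \<sigma> ! a < \<sigma> ! b)) \<and>
            (\<forall>x \<in> X. I ! (x + 1) = I ! x + 1) \<and>
            (\<forall>y \<in> Y. J ! (y + 1) = J ! y + 1))))"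

definition avoiders :: "nat \<Rightarrow> bvpat \<Rightarrow> nat" where
  "avoiders n p = card {\<pi> \<in> perms n. \<not> contains \<pi> p}"

definition inv_perm :: "nat list \<Rightarrow> nat list" where
  "inv_perm \<sigma> = map (\<lambda>v. Suc (THE i. i < length \<sigma> \<and> \<sigma> ! i = v)) [1..<length \<sigma> + 1]"

definition pat_inv :: "bvpat \<Rightarrow> bvpat" where
  "pat_inv p = (case p of (\<sigma>, X, Y) \<Rightarrow> (inv_perm \<sigma>, Y, X))"

definition pat_rev :: "bvpat \<Rightarrow> bvpat" where
  "pat_rev p = (case p of (\<sigma>, X, Y) \<Rightarrow> (rev \<sigma>, (\<lambda>x. length \<sigma> - x) ` X, Y))"

definition pat_compl :: "bvpat \<Rightarrow> bvpat" where
  "pat_compl p = (case p of (\<sigma>, X, Y) \<Rightarrow>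
     (map (\<lambda>v. length \<sigma> + 1 - v) \<sigma>, X, (\<lambda>y. length \<sigma> - y) ` Y))"

inductive_set sym_class :: "bvpat \<Rightarrow> bvpat set" for p :: bvpat where
  base: "p \<in> sym_class p"
| inv: "q \<in> sym_class p \<Longrightarrow> pat_inv q \<in> sym_class p"
| rev: "q \<in> sym_class p \<Longrightarrow> pat_rev q \<in> sym_class p"
| compl: "q \<in> sym_class p \<Longrightarrow> pat_compl q \<in> sym_class p"

end

theory Submission
  imports Defs
begin


lemma perms_D: "\<pi> \<in> perms n \<Longrightarrow> length \<pi> = n \<and> distinct \<pi> \<and> set \<pi> = {1..n}"
  unfolding perms_def by simp

lemma perms_nth: "\<pi> \<in> perms n \<Longrightarrow> i < n \<Longrightarrow> \<pi> ! i \<in> {1..n}"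
  using perms_D nth_mem by metis

lemma perms_ex: "\<pi> \<in> perms n \<Longrightarrow> v \<in> {1..n} \<Longrightarrow> \<exists>i<n. \<pi> ! i = v"
  using perms_D in_set_conv_nth by metis

lemma perms_inj: "\<pi> \<in> perms n \<Longrightarrow> i < n \<Longrightarrow> j < n \<Longrightarrow> \<pi> ! i = \<pi> ! j \<longleftrightarrow> i = j"
  using perms_D nth_eq_iff_index_eq by metis
lemma inv_perm_nth:
  assumes "\<sigma> \<in> perms k" "s < k"
  shows "inv_perm \<sigma> ! s = Suc (THE i. i < k \<and> \<sigma> ! i = Suc s)"
proof -
  have "[1..<k + 1] ! s = Suc s" using assms(2) by (simp del: upt_Suc)
  then show ?thesis using assms unfolding inv_perm_def perms_def by (simp del: upt_Suc)
qed

lemma inv_perm_char: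
  assumes "\<sigma> \<in> perms k" "s < k" "t < k"
  shows "inv_perm \<sigma> ! s = Suc t \<longleftrightarrow> \<sigma> ! t = Suc s"
proof -
  obtain i where i: "i < k" "\<sigma> ! i = Suc s" using perms_ex[OF assms(1), of "Suc s"] assms by auto
  have "(THE i. i < k \<and> \<sigma> ! i = Suc s) = i"
  proof (rule the_equality)
    show "i < k \<and> \<sigma> ! i = Suc s" using i by simp
    fix j assume "j < k \<and> \<sigma> ! j = Suc s"
    then show "j = i" using perms_inj[OF assms(1), of j i] i by simp
  qed
  then have "inv_perm \<sigma> ! s = Suc i" using inv_perm_nth[OF assms(1,2)] by simp
  then show ?thesis using i perms_inj[OF assms(1) i(1) assms(3)] by (metis Suc_inject)
qed

lemma inv_perm_len: "length (inv_perm \<sigma>) = length \<sigma>"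
  unfolding inv_perm_def by (simp del: upt_Suc)

lemma inv_perm_perms:
  assumes "\<sigma> \<in> perms k"
  shows "inv_perm \<sigma> \<in> perms k"
proof -
  have len: "length \<sigma> = k" using assms perms_D by auto
  let ?t = "inv_perm \<sigma>"
  have L: "length ?t = k" using len inv_perm_len by auto
  have R: "\<And>s. s < k \<Longrightarrow> ?t ! s \<in> {1..k}"
  proof -
    fix s assume s: "s < k"
    obtain i where i: "i < k" "\<sigma> ! i = Suc s" using perms_ex[OF assms, of "Suc s"] s by auto
    then show "?t ! s \<in> {1..k}" using inv_perm_char[OF assms s i(1)] by auto
  qed
  have D: "distinct ?t"
  proof (subst distinct_conv_nth, intro allI impI)
    fix s s' assume "s < length ?t" "s' < length ?t" "s \<noteq> s'"
    then have s: "s < k" "s' < k" "s \<noteq> s'" using L by auto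
    define t where "t = ?t ! s - 1"
    have t: "?t ! s = Suc t" "t < k" using R[OF s(1)] unfolding t_def by auto
    show "?t ! s \<noteq> ?t ! s'"
    proof
      assume "?t ! s = ?t ! s'"
      then have "?t ! s' = Suc t" using t by simp
      then have "\<sigma> ! t = Suc s'" using inv_perm_char[OF assms s(2) t(2)] by simp
      moreover have "\<sigma> ! t = Suc s" using inv_perm_char[OF assms s(1) t(2)] t(1) by simp
      ultimately show False using s by simp
    qed
  qed
  have "set ?t \<subseteq> {1..k}" using R L by (auto simp: in_set_conv_nth)
  moreover have "card (set ?t) = k" using D L by (simp add: distinct_card)
  ultimately have "set ?t = {1..k}" by (simp add: card_subset_eq)
  then show ?thesis using L D unfolding perms_def by blast
qed

lemma inv_perm_inv:
  assumes "\<sigma> \<in> perms k"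
  shows "inv_perm (inv_perm \<sigma>) = \<sigma>"
proof (rule nth_equalityI)
  have len: "length \<sigma> = k" using assms perms_D by auto
  then show "length (inv_perm (inv_perm \<sigma>)) = length \<sigma>" by (simp add: inv_perm_len)
  fix t assume "t < length (inv_perm (inv_perm \<sigma>))"
  then have t: "t < k" using len by (simp add: inv_perm_len)
  define s where "s = \<sigma> ! t - 1"
  have s: "\<sigma> ! t = Suc s" "s < k" using perms_nth[OF assms t] unfolding s_def by auto
  have "inv_perm \<sigma> ! s = Suc t" using inv_perm_char[OF assms s(2) t] s by simp
  then show "inv_perm (inv_perm \<sigma>) ! t = \<sigma> ! t"
    using inv_perm_char[OF inv_perm_perms[OF assms] t s(2)] s by simp
qed



definition occ :: "nat \<Rightarrow> nat \<Rightarrow> (nat \<Rightarrow> nat) \<Rightarrow> bool" where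
  "occ n k a \<longleftrightarrow> a 0 = 0 \<and> a (Suc k) = Suc n \<and> strict_mono_on {0..Suc k} a"

definition cont :: "nat list \<Rightarrow> nat list \<Rightarrow> nat set \<Rightarrow> nat set \<Rightarrow> bool" where
  "cont \<pi> \<sigma> X Y \<longleftrightarrow> (\<exists>a b. occ (length \<pi>) (length \<sigma>) a \<and> occ (length \<pi>) (length \<sigma>) b \<and>
     (\<forall>t\<in>{1..length \<sigma>}. \<pi> ! (a t - 1) = b (\<sigma> ! (t - 1))) \<and>
     (\<forall>x\<in>X. a (Suc x) = Suc (a x)) \<and> (\<forall>y\<in>Y. b (Suc y) = Suc (b y)))"

lemma occ_range: "occ n k a \<Longrightarrow> t \<in> {1..k} \<Longrightarrow> a t \<in> {1..n}"
proof -
  assume o: "occ n k a" and t: "t \<in> {1..k}"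
  have sm: "strict_mono_on {0..Suc k} a" and a0: "a 0 = 0" and ak: "a (Suc k) = Suc n" using o occ_def by auto
  have "a 0 < a t" using strict_mono_onD[OF sm, of 0 t] t by auto
  moreover have "a t < a (Suc k)" using strict_mono_onD[OF sm, of t "Suc k"] t by auto
  ultimately show ?thesis using a0 ak by auto
qed

lemma occ_less: "occ n k a \<Longrightarrow> x \<le> Suc k \<Longrightarrow> y \<le> Suc k \<Longrightarrow> a x < a y \<longleftrightarrow> x < y"
  unfolding occ_def using strict_mono_on_less[of "{0..Suc k}" a x y] by auto

lemma ext_nth: "f 0 = 0 \<Longrightarrow> f (Suc k) = m \<Longrightarrow> x \<le> Suc k \<Longrightarrow> ([0] @ map f [1..<Suc k] @ [m]) ! x = f x"
proof -
  assume f0: "f 0 = 0" and fk: "f (Suc k) = m" and x: "x \<le> Suc k"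
  show ?thesis
  proof (cases x)
    case 0 then show ?thesis using f0 by simp
  next
    case (Suc y)
    then have "([0] @ map f [1..<Suc k] @ [m]) ! x = (map f [1..<Suc k] @ [m]) ! y" by simp
    also have "\<dots> = f x"
    proof (cases "y < k")
      case True then show ?thesis using Suc by (simp add: nth_append del: upt_Suc)
    next
      case False then have "y = k" using x Suc by auto
      then show ?thesis using Suc fk by (simp add: nth_append del: upt_Suc)
    qed
    finally show ?thesis .
  qed
qed

lemma sorted_ext_occ:
  assumes "sorted_wrt (<) xs" "set xs \<subseteq> {1..n}" "length xs = k"
  shows "occ n k (\<lambda>x. ([0] @ xs @ [Suc n]) ! x)"
proof -
  let ?I = "[0] @ xs @ [Suc n]"
  have s: "sorted_wrt (<) ?I" using assms(1,2) by (auto simp: sorted_wrt_append)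
  have l: "length ?I = Suc (Suc k)" using assms(3) by simp
  have "strict_mono_on {0..Suc k} (\<lambda>x. ?I ! x)"
    by (rule strict_mono_onI) (use s l in \<open>auto simp: sorted_wrt_iff_nth_less\<close>)
  moreover have "?I ! Suc k = Suc n" using assms(3) by (simp add: nth_append)
  ultimately show ?thesis unfolding occ_def by simp
qed


lemma cont_imp_contains:
  assumes sig: "\<sigma> \<in> perms k" and pi: "\<pi> \<in> perms n"
    and XY: "X \<subseteq> {0..k}" "Y \<subseteq> {0..k}" and c: "cont \<pi> \<sigma> X Y"
  shows "contains \<pi> (\<sigma>, X, Y)"
proof -
  have lk: "length \<sigma> = k" using perms_D[OF sig] by simp
  have ln: "length \<pi> = n" using perms_D[OF pi] by simp
  obtain a b where oa: "occ n k a" and ob: "occ n k b"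
    and eq: "\<forall>t\<in>{1..k}. \<pi> ! (a t - 1) = b (\<sigma> ! (t - 1))"
    and hX: "\<forall>x\<in>X. a (Suc x) = Suc (a x)" and hY: "\<forall>y\<in>Y. b (Suc y) = Suc (b y)"
    using c unfolding cont_def lk ln by blast
  have a0: "a 0 = 0" "a (Suc k) = Suc n" using oa occ_def by auto
  have b0: "b 0 = 0" "b (Suc k) = Suc n" using ob occ_def by auto
  define ii where "ii = map a [1..<Suc k]"
  define vals where "vals = map (\<lambda>i. \<pi> ! (i - 1)) ii"
  have vals: "vals = map b \<sigma>"
  proof (rule nth_equalityI)
    show "length vals = length (map b \<sigma>)" using lk by (simp add: vals_def ii_def)
    fix t assume "t < length vals"
    then have t: "t < k" by (simp add: vals_def ii_def del: upt_Suc)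
    have "vals ! t = \<pi> ! (a (Suc t) - 1)" using t by (simp add: vals_def ii_def del: upt_Suc)
    also have "\<dots> = b (\<sigma> ! t)" using eq t by force
    finally show "vals ! t = map b \<sigma> ! t" using t lk by simp
  qed
  have sigk: "\<And>t. t < k \<Longrightarrow> \<sigma> ! t \<in> {1..k}" using perms_nth[OF sig] .
  have js: "sort vals = map b [1..<Suc k]"
  proof (rule sorted_distinct_set_unique)
    show "sorted (sort vals)" by simp
    have "distinct (map b \<sigma>)"
    proof (subst distinct_conv_nth, intro allI impI)
      fix i j assume "i < length (map b \<sigma>)" "j < length (map b \<sigma>)" "i \<noteq> j"
      then have ij: "i < k" "j < k" "i \<noteq> j" using lk by auto
      then have "\<sigma> ! i \<noteq> \<sigma> ! j" using perms_inj[OF sig] by auto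
      then show "map b \<sigma> ! i \<noteq> map b \<sigma> ! j"
        using ij lk occ_less[OF ob, of "\<sigma> ! i" "\<sigma> ! j"] occ_less[OF ob, of "\<sigma> ! j" "\<sigma> ! i"] sigk[of i] sigk[of j]
        by (auto simp: linorder_neq_iff)
    qed
    then show "distinct (sort vals)" using vals by simp
    have "sorted_wrt (<) (map b [1..<Suc k])"
      unfolding sorted_wrt_iff_nth_less using occ_less[OF ob] by (auto simp del: upt_Suc)
    then show "sorted (map b [1..<Suc k])" "distinct (map b [1..<Suc k])" by (auto simp: strict_sorted_iff)
    have "set \<sigma> = {1..k}" using perms_D[OF sig] by simp
    then show "set (sort vals) = set (map b [1..<Suc k])" using vals
      by (simp add: atLeastLessThanSuc_atLeastAtMost del: upt_Suc)
  qed
  have Inth: "\<And>x. x \<le> Suc k \<Longrightarrow> ([0] @ ii @ [length \<pi> + 1]) ! x = a x"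
    unfolding ii_def ln using ext_nth[of a k "Suc n"] a0 by simp
  have Jnth: "\<And>x. x \<le> Suc k \<Longrightarrow> ([0] @ sort vals @ [length \<pi> + 1]) ! x = b x"
    unfolding js ln using ext_nth[of b k "Suc n"] b0 by simp
  show ?thesis
    unfolding contains_def prod.case Let_def
  proof (rule exI[of _ ii], intro conjI)
    show "length ii = length \<sigma>" using lk by (simp add: ii_def)
    show "sorted_wrt (<) ii"
      unfolding ii_def sorted_wrt_iff_nth_less using occ_less[OF oa] by (auto simp del: upt_Suc)
    show "set ii \<subseteq> {1..length \<pi>}" unfolding ii_def ln using occ_range[OF oa] by auto
    show "\<forall>i<length \<sigma>. \<forall>j<length \<sigma>. (map (\<lambda>i. \<pi> ! (i - 1)) ii ! i < map (\<lambda>i. \<pi> ! (i - 1)) ii ! j) = (\<sigma> ! i < \<sigma> ! j)"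
    proof (intro allI impI)
      fix i j assume "i < length \<sigma>" "j < length \<sigma>"
      then have ij: "i < k" "j < k" using lk by auto
      show "(map (\<lambda>i. \<pi> ! (i - 1)) ii ! i < map (\<lambda>i. \<pi> ! (i - 1)) ii ! j) = (\<sigma> ! i < \<sigma> ! j)"
        using vals[unfolded vals_def] ij lk occ_less[OF ob, of "\<sigma> ! i" "\<sigma> ! j"] sigk[of i] sigk[of j] by auto
    qed
    show "\<forall>x\<in>X. ([0] @ ii @ [length \<pi> + 1]) ! (x + 1) = ([0] @ ii @ [length \<pi> + 1]) ! x + 1"
    proof
      fix x assume xX: "x \<in> X"
      then have x: "x \<le> k" using XY(1) by auto
      have e1: "([0] @ ii @ [length \<pi> + 1]) ! (x + 1) = a (x + 1)" by (rule Inth) (use x in simp)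
      have e2: "([0] @ ii @ [length \<pi> + 1]) ! x = a x" by (rule Inth) (use x in simp)
      show "([0] @ ii @ [length \<pi> + 1]) ! (x + 1) = ([0] @ ii @ [length \<pi> + 1]) ! x + 1"
        unfolding e1 e2 using hX xX by simp
    qed
    show "\<forall>y\<in>Y. ([0] @ sort (map (\<lambda>i. \<pi> ! (i - 1)) ii) @ [length \<pi> + 1]) ! (y + 1) =
              ([0] @ sort (map (\<lambda>i. \<pi> ! (i - 1)) ii) @ [length \<pi> + 1]) ! y + 1"
    proof
      fix x assume xX: "x \<in> Y"
      then have x: "x \<le> k" using XY(2) by auto
      have e1: "([0] @ sort vals @ [length \<pi> + 1]) ! (x + 1) = b (x + 1)" by (rule Jnth) (use x in simp)
      have e2: "([0] @ sort vals @ [length \<pi> + 1]) ! x = b x" by (rule Jnth) (use x in simp)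
      show "([0] @ sort (map (\<lambda>i. \<pi> ! (i - 1)) ii) @ [length \<pi> + 1]) ! (x + 1) =
              ([0] @ sort (map (\<lambda>i. \<pi> ! (i - 1)) ii) @ [length \<pi> + 1]) ! x + 1"
        unfolding vals_def[symmetric] e1 e2 using hY xX by simp
    qed
  qed
qed


lemma contains_imp_cont:
  assumes sig: "\<sigma> \<in> perms k" and pi: "\<pi> \<in> perms n"
    and c: "contains \<pi> (\<sigma>, X, Y)"
  shows "cont \<pi> \<sigma> X Y"
proof -
  have lk: "length \<sigma> = k" using perms_D[OF sig] by simp
  have ln: "length \<pi> = n" using perms_D[OF pi] by simp
  obtain ii where lii: "length ii = k" and sii: "sorted_wrt (<) ii" and rii: "set ii \<subseteq> {1..n}"
    and iso: "\<forall>a<k. \<forall>b<k. (map (\<lambda>i. \<pi> ! (i - 1)) ii ! a < map (\<lambda>i. \<pi> ! (i - 1)) ii ! b) = (\<sigma> ! a < \<sigma> ! b)"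
    and hX: "\<forall>x\<in>X. ([0] @ ii @ [n + 1]) ! (x + 1) = ([0] @ ii @ [n + 1]) ! x + 1"
    and hY: "\<forall>y\<in>Y. ([0] @ sort (map (\<lambda>i. \<pi> ! (i - 1)) ii) @ [n + 1]) ! (y + 1) =
              ([0] @ sort (map (\<lambda>i. \<pi> ! (i - 1)) ii) @ [n + 1]) ! y + 1"
    using c unfolding contains_def prod.case Let_def lk ln by blast
  define vals where "vals = map (\<lambda>i. \<pi> ! (i - 1)) ii"
  have lv: "length vals = k" using lii vals_def by simp
  have vnth: "\<And>t. t < k \<Longrightarrow> vals ! t = \<pi> ! (ii ! t - 1)" using lii vals_def by simp
  have iso': "\<And>a b. a < k \<Longrightarrow> b < k \<Longrightarrow> vals ! a < vals ! b \<longleftrightarrow> \<sigma> ! a < \<sigma> ! b"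
    using iso vals_def by blast
  have dv: "distinct vals"
  proof (subst distinct_conv_nth, intro allI impI)
    fix i j assume "i < length vals" "j < length vals" "i \<noteq> j"
    then have ij: "i < k" "j < k" "i \<noteq> j" using lv by auto
    then have "\<sigma> ! i \<noteq> \<sigma> ! j" using perms_inj[OF sig] by auto
    then show "vals ! i \<noteq> vals ! j" using iso'[OF ij(1,2)] iso'[OF ij(2,1)] by (auto simp: linorder_neq_iff)
  qed
  have rv: "set vals \<subseteq> {1..n}"
  proof
    fix v assume "v \<in> set vals"
    then obtain t where t: "t < k" "v = vals ! t" using lv by (auto simp: in_set_conv_nth)
    have "ii ! t \<in> {1..n}" using rii t lii nth_mem by blast
    then have "ii ! t - 1 < n" by auto
    then show "v \<in> {1..n}" using t vnth perms_nth[OF pi] by simp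
  qed
  define \<tau> where "\<tau> = inv_perm \<sigma>"
  have tau: "\<tau> \<in> perms k" using inv_perm_perms[OF sig] \<tau>_def by simp
  have ltau: "length \<tau> = k" using perms_D[OF tau] by simp
  define w where "w = map (\<lambda>u. vals ! (u - 1)) \<tau>"
  have lw: "length w = k" using ltau w_def by simp
  have tau_sig: "\<And>s. s < k \<Longrightarrow> \<sigma> ! (\<tau> ! s - 1) = Suc s \<and> \<tau> ! s - 1 < k \<and> \<tau> ! s = Suc (\<tau> ! s - 1)"
  proof -
    fix s assume s: "s < k"
    have "\<tau> ! s \<in> {1..k}" using perms_nth[OF tau s] .
    then have "\<tau> ! s = Suc (\<tau> ! s - 1)" "\<tau> ! s - 1 < k" by auto
    then show "\<sigma> ! (\<tau> ! s - 1) = Suc s \<and> \<tau> ! s - 1 < k \<and> \<tau> ! s = Suc (\<tau> ! s - 1)"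
      using inv_perm_char[OF sig s, of "\<tau> ! s - 1"] \<tau>_def by auto
  qed
  have sw: "sorted_wrt (<) w"
    unfolding sorted_wrt_iff_nth_less
  proof (intro allI impI)
    fix i j assume ij: "i < j" "j < length w"
    then have ij': "i < k" "j < k" using lw by auto
    have "vals ! (\<tau> ! i - 1) < vals ! (\<tau> ! j - 1)"
      using iso'[of "\<tau> ! i - 1" "\<tau> ! j - 1"] tau_sig[OF ij'(1)] tau_sig[OF ij'(2)] ij by auto
    then show "w ! i < w ! j" using ij' ltau w_def by simp
  qed
  have sortv: "sort vals = w"
  proof (rule sorted_distinct_set_unique)
    show "sorted (sort vals)" "distinct (sort vals)" using dv by auto
    show "sorted w" "distinct w" using sw by (auto simp: strict_sorted_iff)
    have "set w \<subseteq> set vals"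
    proof
      fix v assume "v \<in> set w"
      then obtain s where s: "s < k" "v = w ! s" using lw by (auto simp: in_set_conv_nth)
      then have "v = vals ! (\<tau> ! s - 1)" using ltau w_def by simp
      then show "v \<in> set vals" using tau_sig[OF s(1)] lv by auto
    qed
    moreover have "card (set w) = card (set vals)"
      using \<open>distinct w\<close> dv lw lv by (simp add: distinct_card)
    ultimately show "set (sort vals) = set w" using card_subset_eq[of "set vals" "set w"] by simp
  qed
  define a where "a = (\<lambda>x. ([0] @ ii @ [Suc n]) ! x)"
  define b where "b = (\<lambda>x. ([0] @ sort vals @ [Suc n]) ! x)"
  have oa: "occ n k a" unfolding a_def by (rule sorted_ext_occ[OF sii rii lii])
  have ob: "occ n k b" unfolding b_def
    by (rule sorted_ext_occ) (use dv rv lv in \<open>auto simp: strict_sorted_iff\<close>)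
  have main: "\<forall>t\<in>{1..k}. \<pi> ! (a t - 1) = b (\<sigma> ! (t - 1))"
  proof
    fix t assume t: "t \<in> {1..k}"
    then obtain t' where t': "t = Suc t'" "t' < k" by (cases t) auto
    have "a t = ii ! t'" using t' lii unfolding a_def by (simp add: nth_append)
    then have L: "\<pi> ! (a t - 1) = vals ! t'" using vnth[OF t'(2)] by simp
    obtain s where s: "\<sigma> ! t' = Suc s" "s < k" using perms_nth[OF sig t'(2)] by (cases "\<sigma> ! t'") auto
    have "\<tau> ! s = Suc t'" using inv_perm_char[OF sig s(2) t'(2)] s(1) \<tau>_def by simp
    have "b (\<sigma> ! (t - 1)) = sort vals ! s" using s t' lv unfolding b_def by (simp add: nth_append)
    also have "\<dots> = vals ! t'" using sortv s(2) ltau \<open>\<tau> ! s = Suc t'\<close> w_def by simp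
    finally show "\<pi> ! (a t - 1) = b (\<sigma> ! (t - 1))" using L by simp
  qed
  have hXa: "\<forall>x\<in>X. a (Suc x) = Suc (a x)" using hX unfolding a_def by simp
  have hYb: "\<forall>x\<in>Y. b (Suc x) = Suc (b x)" using hY unfolding b_def vals_def by simp
  show ?thesis unfolding cont_def lk ln
    by (rule exI[of _ a], rule exI[of _ b]) (use oa ob main hXa hYb in blast)
qed

lemma contains_cont:
  assumes "\<sigma> \<in> perms k" "\<pi> \<in> perms n" "X \<subseteq> {0..k}" "Y \<subseteq> {0..k}"
  shows "contains \<pi> (\<sigma>, X, Y) \<longleftrightarrow> cont \<pi> \<sigma> X Y"
  using contains_imp_cont cont_imp_contains assms by metis



lemma occ_le: "occ n k a \<Longrightarrow> x \<le> Suc k \<Longrightarrow> a x \<le> Suc n"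
proof -
  assume o: "occ n k a" and x: "x \<le> Suc k"
  have "a (Suc k) = Suc n" using o occ_def by simp
  moreover have "a x \<le> a (Suc k)" using occ_less[OF o x, of "Suc k"] x by (cases "x = Suc k") auto
  ultimately show ?thesis by simp
qed

lemma perms_I: "length \<pi> = n \<Longrightarrow> distinct \<pi> \<Longrightarrow> set \<pi> = {1..n} \<Longrightarrow> \<pi> \<in> perms n"
  unfolding perms_def by blast

lemma rev_perms: "\<pi> \<in> perms n \<Longrightarrow> rev \<pi> \<in> perms n"
  using perms_D[of \<pi> n] perms_I[of "rev \<pi>" n] by simp

lemma compl_perms:
  assumes "\<pi> \<in> perms n" shows "map (\<lambda>v. Suc n - v) \<pi> \<in> perms n"
proof -
  have D: "length \<pi> = n" "distinct \<pi>" "set \<pi> = {1..n}" using perms_D[OF assms] by auto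
  have inj: "inj_on (\<lambda>v. Suc n - v) {1..n}" by (rule inj_onI) auto
  have img: "(\<lambda>v. Suc n - v) ` {1..n} = {1..n}"
  proof
    show "(\<lambda>v. Suc n - v) ` {1..n} \<subseteq> {1..n}" by auto
    show "{1..n} \<subseteq> (\<lambda>v. Suc n - v) ` {1..n}"
    proof
      fix x assume "x \<in> {1..n}"
      then have "x = Suc n - (Suc n - x)" "Suc n - x \<in> {1..n}" by auto
      then show "x \<in> (\<lambda>v. Suc n - v) ` {1..n}" by blast
    qed
  qed
  have "distinct (map (\<lambda>v. Suc n - v) \<pi>)" using D inj by (simp add: distinct_map)
  then show ?thesis using D img perms_I[of "map (\<lambda>v. Suc n - v) \<pi>" n] by simp
qed

lemma cont_rev:
  assumes sig: "\<sigma> \<in> perms k" and pi: "\<pi> \<in> perms n" and XS: "X \<subseteq> {0..k}"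
    and c: "cont (rev \<pi>) \<sigma> X Y"
  shows "cont \<pi> (rev \<sigma>) ((\<lambda>x. k - x) ` X) Y"
proof -
  have lk: "length \<sigma> = k" using perms_D[OF sig] by simp
  have ln: "length \<pi> = n" using perms_D[OF pi] by simp
  obtain a b where oa: "occ n k a" and ob: "occ n k b"
    and eq: "\<forall>t\<in>{1..k}. rev \<pi> ! (a t - 1) = b (\<sigma> ! (t - 1))"
    and hX: "\<forall>x\<in>X. a (Suc x) = Suc (a x)" and hY: "\<forall>y\<in>Y. b (Suc y) = Suc (b y)"
    using c unfolding cont_def lk length_rev ln by blast
  define a' where "a' = (\<lambda>t. Suc n - a (Suc k - t))"
  have oa': "occ n k a'"
    unfolding occ_def
  proof (intro conjI)
    show "a' 0 = 0" using oa unfolding a'_def occ_def by simp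
    show "a' (Suc k) = Suc n" using oa unfolding a'_def occ_def by simp
    show "strict_mono_on {0..Suc k} a'"
    proof (rule strict_mono_onI)
      fix r s assume rs: "r \<in> {0..Suc k}" "s \<in> {0..Suc k}" "r < s"
      have "a (Suc k - s) < a (Suc k - r)" using occ_less[OF oa, of "Suc k - s" "Suc k - r"] rs by auto
      moreover have "a (Suc k - r) \<le> Suc n" using occ_le[OF oa] by simp
      ultimately show "a' r < a' s" unfolding a'_def by simp
    qed
  qed
  have main: "\<forall>t\<in>{1..k}. \<pi> ! (a' t - 1) = b (rev \<sigma> ! (t - 1))"
  proof
    fix t assume t: "t \<in> {1..k}"
    define u where "u = Suc k - t"
    have u: "u \<in> {1..k}" using t u_def by auto
    have au: "a u \<in> {1..n}" using occ_range[OF oa u] .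
    have "a u - 1 < length \<pi>" using au ln by auto
    then have "rev \<pi> ! (a u - 1) = \<pi> ! (length \<pi> - Suc (a u - 1))" by (rule rev_nth)
    then have "rev \<pi> ! (a u - 1) = \<pi> ! (n - a u)" using au ln by simp
    moreover have "a' t - 1 = n - a u" unfolding a'_def u_def using au by simp
    moreover have "rev \<sigma> ! (t - 1) = \<sigma> ! (length \<sigma> - Suc (t - 1))" using t lk by (intro rev_nth) auto
    moreover have "length \<sigma> - Suc (t - 1) = u - 1" using t lk u_def by auto
    ultimately show "\<pi> ! (a' t - 1) = b (rev \<sigma> ! (t - 1))" using eq u by metis
  qed
  have hX': "\<forall>x\<in>(\<lambda>x. k - x) ` X. a' (Suc x) = Suc (a' x)"
  proof
    fix x' assume "x' \<in> (\<lambda>x. k - x) ` X"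
    then obtain x where x: "x \<in> X" "x' = k - x" by blast
    have xk: "x \<le> k" using x XS by auto
    have "a (Suc x) \<le> Suc n" using occ_le[OF oa] xk by simp
    then show "a' (Suc x') = Suc (a' x')" unfolding a'_def using x xk hX
      by (simp add: Suc_diff_le)
  qed
  show ?thesis unfolding cont_def length_rev lk ln
    by (rule exI[of _ a'], rule exI[of _ b]) (use oa' ob main hX' hY in blast)
qed

lemma cont_compl:
  assumes sig: "\<sigma> \<in> perms k" and pi: "\<pi> \<in> perms n" and YS: "Y \<subseteq> {0..k}"
    and c: "cont (map (\<lambda>v. Suc n - v) \<pi>) \<sigma> X Y"
  shows "cont \<pi> (map (\<lambda>v. Suc k - v) \<sigma>) X ((\<lambda>y. k - y) ` Y)"
proof -
  have lk: "length \<sigma> = k" using perms_D[OF sig] by simp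
  have ln: "length \<pi> = n" using perms_D[OF pi] by simp
  obtain a b where oa: "occ n k a" and ob: "occ n k b"
    and eq: "\<forall>t\<in>{1..k}. map (\<lambda>v. Suc n - v) \<pi> ! (a t - 1) = b (\<sigma> ! (t - 1))"
    and hX: "\<forall>x\<in>X. a (Suc x) = Suc (a x)" and hY: "\<forall>y\<in>Y. b (Suc y) = Suc (b y)"
    using c unfolding cont_def lk length_map ln by blast
  define b' where "b' = (\<lambda>t. Suc n - b (Suc k - t))"
  have ob': "occ n k b'"
    unfolding occ_def
  proof (intro conjI)
    show "b' 0 = 0" using ob unfolding b'_def occ_def by simp
    show "b' (Suc k) = Suc n" using ob unfolding b'_def occ_def by simp
    show "strict_mono_on {0..Suc k} b'"
    proof (rule strict_mono_onI)
      fix r s assume rs: "r \<in> {0..Suc k}" "s \<in> {0..Suc k}" "r < s"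
      have "b (Suc k - s) < b (Suc k - r)" using occ_less[OF ob, of "Suc k - s" "Suc k - r"] rs by auto
      moreover have "b (Suc k - r) \<le> Suc n" using occ_le[OF ob] by simp
      ultimately show "b' r < b' s" unfolding b'_def by simp
    qed
  qed
  have main: "\<forall>t\<in>{1..k}. \<pi> ! (a t - 1) = b' (map (\<lambda>v. Suc k - v) \<sigma> ! (t - 1))"
  proof
    fix t assume t: "t \<in> {1..k}"
    have at: "a t - 1 < n" using occ_range[OF oa t] by auto
    have pv: "\<pi> ! (a t - 1) \<in> {1..n}" using perms_nth[OF pi at] .
    have sv: "\<sigma> ! (t - 1) \<in> {1..k}" using perms_nth[OF sig] t by auto
    have "map (\<lambda>v. Suc n - v) \<pi> ! (a t - 1) = Suc n - \<pi> ! (a t - 1)" using at ln by simp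
    then have "Suc n - \<pi> ! (a t - 1) = b (\<sigma> ! (t - 1))" using eq t by metis
    then have "\<pi> ! (a t - 1) = Suc n - b (\<sigma> ! (t - 1))" using pv by auto
    moreover have "map (\<lambda>v. Suc k - v) \<sigma> ! (t - 1) = Suc k - \<sigma> ! (t - 1)" using t lk by auto
    moreover have "Suc k - (Suc k - \<sigma> ! (t - 1)) = \<sigma> ! (t - 1)" using sv by auto
    ultimately show "\<pi> ! (a t - 1) = b' (map (\<lambda>v. Suc k - v) \<sigma> ! (t - 1))" unfolding b'_def by simp
  qed
  have hY': "\<forall>x\<in>(\<lambda>x. k - x) ` Y. b' (Suc x) = Suc (b' x)"
  proof
    fix x' assume "x' \<in> (\<lambda>x. k - x) ` Y"
    then obtain x where x: "x \<in> Y" "x' = k - x" by blast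
    have xk: "x \<le> k" using x YS by auto
    have "b (Suc x) \<le> Suc n" using occ_le[OF ob] xk by simp
    then show "b' (Suc x') = Suc (b' x')" unfolding b'_def using x xk hY
      by (simp add: Suc_diff_le)
  qed
  show ?thesis unfolding cont_def length_map lk ln
    by (rule exI[of _ a], rule exI[of _ b']) (use oa ob' main hX hY' in blast)
qed

lemma cont_inv:
  assumes sig: "\<sigma> \<in> perms k" and pi: "\<pi> \<in> perms n"
    and c: "cont (inv_perm \<pi>) \<sigma> X Y"
  shows "cont \<pi> (inv_perm \<sigma>) Y X"
proof -
  have lk: "length \<sigma> = k" using perms_D[OF sig] by simp
  have ln: "length \<pi> = n" using perms_D[OF pi] by simp
  obtain a b where oa: "occ n k a" and ob: "occ n k b"
    and eq: "\<forall>t\<in>{1..k}. inv_perm \<pi> ! (a t - 1) = b (\<sigma> ! (t - 1))"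
    and hX: "\<forall>x\<in>X. a (Suc x) = Suc (a x)" and hY: "\<forall>y\<in>Y. b (Suc y) = Suc (b y)"
    using c unfolding cont_def lk inv_perm_len ln by blast
  have main: "\<forall>s\<in>{1..k}. \<pi> ! (b s - 1) = a (inv_perm \<sigma> ! (s - 1))"
  proof
    fix s assume s: "s \<in> {1..k}"
    define t where "t = inv_perm \<sigma> ! (s - 1)"
    have s1: "s - 1 < k" using s by auto
    have t: "t \<in> {1..k}" using perms_nth[OF inv_perm_perms[OF sig] s1] t_def by simp
    have t1: "t - 1 < k" "t = Suc (t - 1)" using t by auto
    have "\<sigma> ! (t - 1) = Suc (s - 1)" using inv_perm_char[OF sig s1 t1(1)] t1(2) t_def by simp
    then have "\<sigma> ! (t - 1) = s" using s by simp
    then have e: "inv_perm \<pi> ! (a t - 1) = b s" using eq t by auto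
    have at: "a t \<in> {1..n}" using occ_range[OF oa t] .
    have bs: "b s \<in> {1..n}" using occ_range[OF ob s] .
    have "inv_perm \<pi> ! (a t - 1) = Suc (b s - 1)" using e bs by simp
    moreover have "a t - 1 < n" "b s - 1 < n" using at bs by auto
    ultimately have "\<pi> ! (b s - 1) = Suc (a t - 1)" using inv_perm_char[OF pi, of "a t - 1" "b s - 1"] by simp
    then show "\<pi> ! (b s - 1) = a (inv_perm \<sigma> ! (s - 1))" using at t_def by simp
  qed
  show ?thesis unfolding cont_def inv_perm_len lk ln
    by (rule exI[of _ b], rule exI[of _ a]) (use oa ob main hX hY in blast)
qed



lemma bvpat_D: "is_bvpat (\<sigma>, X, Y) \<Longrightarrow> \<sigma> \<in> perms (length \<sigma>) \<and> X \<subseteq> {0..length \<sigma>} \<and> Y \<subseteq> {0..length \<sigma>}"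
  unfolding is_bvpat_def by simp

lemma img_sub: "X \<subseteq> {0..k} \<Longrightarrow> (\<lambda>x. k - x) ` X \<subseteq> {0..(k::nat)}" by auto

lemma img_img: "X \<subseteq> {0..k} \<Longrightarrow> (\<lambda>x. k - x) ` (\<lambda>x. k - x) ` X = (X::nat set)"
proof -
  assume X: "X \<subseteq> {0..k}"
  have "(\<lambda>x. k - x) ` (\<lambda>x. k - x) ` X = (\<lambda>x. k - (k - x)) ` X" by (simp add: image_image)
  also have "\<dots> = (\<lambda>x. x) ` X" by (rule image_cong) (use X in auto)
  finally show ?thesis by simp
qed

lemma compl_compl: "\<pi> \<in> perms n \<Longrightarrow> map (\<lambda>v. Suc n - v) (map (\<lambda>v. Suc n - v) \<pi>) = \<pi>"
proof -
  assume pi: "\<pi> \<in> perms n"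
  have "set \<pi> = {1..n}" using perms_D[OF pi] by simp
  then have "\<forall>v\<in>set \<pi>. Suc n - (Suc n - v) = v" by auto
  then show ?thesis by (simp add: map_idI)
qed

lemma bv_rev: "is_bvpat p \<Longrightarrow> is_bvpat (pat_rev p)"
proof -
  assume "is_bvpat p"
  moreover obtain \<sigma> X Y where p: "p = (\<sigma>, X, Y)" by (cases p) auto
  ultimately have b: "\<sigma> \<in> perms (length \<sigma>)" "X \<subseteq> {0..length \<sigma>}" "Y \<subseteq> {0..length \<sigma>}" using bvpat_D by auto
  show ?thesis unfolding p pat_rev_def is_bvpat_def prod.case length_rev
    using rev_perms[OF b(1)] img_sub[OF b(2)] b(3) by simp
qed

lemma bv_compl: "is_bvpat p \<Longrightarrow> is_bvpat (pat_compl p)"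
proof -
  assume "is_bvpat p"
  moreover obtain \<sigma> X Y where p: "p = (\<sigma>, X, Y)" by (cases p) auto
  ultimately have b: "\<sigma> \<in> perms (length \<sigma>)" "X \<subseteq> {0..length \<sigma>}" "Y \<subseteq> {0..length \<sigma>}" using bvpat_D by auto
  show ?thesis unfolding p pat_compl_def is_bvpat_def prod.case length_map
    using compl_perms[OF b(1)] img_sub[OF b(3)] b(2) by simp
qed

lemma bv_inv: "is_bvpat p \<Longrightarrow> is_bvpat (pat_inv p)"
proof -
  assume "is_bvpat p"
  moreover obtain \<sigma> X Y where p: "p = (\<sigma>, X, Y)" by (cases p) auto
  ultimately have b: "\<sigma> \<in> perms (length \<sigma>)" "X \<subseteq> {0..length \<sigma>}" "Y \<subseteq> {0..length \<sigma>}" using bvpat_D by auto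
  show ?thesis unfolding p pat_inv_def is_bvpat_def prod.case inv_perm_len
    using inv_perm_perms[OF b(1)] b(2,3) by simp
qed

lemma contains_rev:
  assumes "is_bvpat p" "\<pi> \<in> perms n"
  shows "contains \<pi> (pat_rev p) \<longleftrightarrow> contains (rev \<pi>) p"
proof -
  obtain \<sigma> X Y where p: "p = (\<sigma>, X, Y)" by (cases p) auto
  define k where "k = length \<sigma>"
  have b: "\<sigma> \<in> perms k" "X \<subseteq> {0..k}" "Y \<subseteq> {0..k}" using bvpat_D assms(1) p k_def by auto
  have e1: "contains \<pi> (pat_rev p) \<longleftrightarrow> cont \<pi> (rev \<sigma>) ((\<lambda>x. k - x) ` X) Y"
    unfolding p pat_rev_def prod.case k_def[symmetric]
    by (rule contains_cont[OF rev_perms[OF b(1)] assms(2) img_sub[OF b(2)] b(3)])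
  have e2: "contains (rev \<pi>) p \<longleftrightarrow> cont (rev \<pi>) \<sigma> X Y"
    unfolding p by (rule contains_cont[OF b(1) rev_perms[OF assms(2)] b(2,3)])
  have "cont \<pi> (rev \<sigma>) ((\<lambda>x. k - x) ` X) Y \<longleftrightarrow> cont (rev \<pi>) \<sigma> X Y"
  proof
    assume "cont \<pi> (rev \<sigma>) ((\<lambda>x. k - x) ` X) Y"
    then have "cont (rev (rev \<pi>)) (rev \<sigma>) ((\<lambda>x. k - x) ` X) Y" by simp
    from cont_rev[OF rev_perms[OF b(1)] rev_perms[OF assms(2)] img_sub[OF b(2)] this]
    show "cont (rev \<pi>) \<sigma> X Y" using img_img[OF b(2)] by simp
  next
    assume "cont (rev \<pi>) \<sigma> X Y"
    from cont_rev[OF b(1) assms(2) b(2) this] show "cont \<pi> (rev \<sigma>) ((\<lambda>x. k - x) ` X) Y" .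
  qed
  then show ?thesis using e1 e2 by simp
qed

lemma contains_compl:
  assumes "is_bvpat p" "\<pi> \<in> perms n"
  shows "contains \<pi> (pat_compl p) \<longleftrightarrow> contains (map (\<lambda>v. Suc n - v) \<pi>) p"
proof -
  obtain \<sigma> X Y where p: "p = (\<sigma>, X, Y)" by (cases p) auto
  define k where "k = length \<sigma>"
  have b: "\<sigma> \<in> perms k" "X \<subseteq> {0..k}" "Y \<subseteq> {0..k}" using bvpat_D assms(1) p k_def by auto
  have e1: "contains \<pi> (pat_compl p) \<longleftrightarrow> cont \<pi> (map (\<lambda>v. Suc k - v) \<sigma>) X ((\<lambda>x. k - x) ` Y)"
    unfolding p pat_compl_def prod.case k_def[symmetric] Suc_eq_plus1[symmetric]
    by (rule contains_cont[OF compl_perms[OF b(1)] assms(2) b(2) img_sub[OF b(3)]])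
  have e2: "contains (map (\<lambda>v. Suc n - v) \<pi>) p \<longleftrightarrow> cont (map (\<lambda>v. Suc n - v) \<pi>) \<sigma> X Y"
    unfolding p by (rule contains_cont[OF b(1) compl_perms[OF assms(2)] b(2,3)])
  have "cont \<pi> (map (\<lambda>v. Suc k - v) \<sigma>) X ((\<lambda>x. k - x) ` Y) \<longleftrightarrow> cont (map (\<lambda>v. Suc n - v) \<pi>) \<sigma> X Y"
  proof
    assume "cont \<pi> (map (\<lambda>v. Suc k - v) \<sigma>) X ((\<lambda>x. k - x) ` Y)"
    then have "cont (map (\<lambda>v. Suc n - v) (map (\<lambda>v. Suc n - v) \<pi>)) (map (\<lambda>v. Suc k - v) \<sigma>) X ((\<lambda>x. k - x) ` Y)"
      using compl_compl[OF assms(2)] by simp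
    from cont_compl[OF compl_perms[OF b(1)] compl_perms[OF assms(2)] img_sub[OF b(3)] this]
    show "cont (map (\<lambda>v. Suc n - v) \<pi>) \<sigma> X Y" using img_img[OF b(3)] compl_compl[OF b(1)] by simp
  next
    assume "cont (map (\<lambda>v. Suc n - v) \<pi>) \<sigma> X Y"
    from cont_compl[OF b(1) assms(2) b(3) this] show "cont \<pi> (map (\<lambda>v. Suc k - v) \<sigma>) X ((\<lambda>x. k - x) ` Y)" .
  qed
  then show ?thesis using e1 e2 by simp
qed

lemma contains_inv:
  assumes "is_bvpat p" "\<pi> \<in> perms n"
  shows "contains \<pi> (pat_inv p) \<longleftrightarrow> contains (inv_perm \<pi>) p"
proof -
  obtain \<sigma> X Y where p: "p = (\<sigma>, X, Y)" by (cases p) auto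
  define k where "k = length \<sigma>"
  have b: "\<sigma> \<in> perms k" "X \<subseteq> {0..k}" "Y \<subseteq> {0..k}" using bvpat_D assms(1) p k_def by auto
  have e1: "contains \<pi> (pat_inv p) \<longleftrightarrow> cont \<pi> (inv_perm \<sigma>) Y X"
    unfolding p pat_inv_def prod.case
    by (rule contains_cont[OF inv_perm_perms[OF b(1)] assms(2) b(3) b(2)])
  have e2: "contains (inv_perm \<pi>) p \<longleftrightarrow> cont (inv_perm \<pi>) \<sigma> X Y"
    unfolding p by (rule contains_cont[OF b(1) inv_perm_perms[OF assms(2)] b(2,3)])
  have "cont \<pi> (inv_perm \<sigma>) Y X \<longleftrightarrow> cont (inv_perm \<pi>) \<sigma> X Y"
  proof
    assume "cont \<pi> (inv_perm \<sigma>) Y X"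
    then have "cont (inv_perm (inv_perm \<pi>)) (inv_perm \<sigma>) Y X" using inv_perm_inv[OF assms(2)] by simp
    from cont_inv[OF inv_perm_perms[OF b(1)] inv_perm_perms[OF assms(2)] this]
    show "cont (inv_perm \<pi>) \<sigma> X Y" using inv_perm_inv[OF b(1)] by simp
  next
    assume "cont (inv_perm \<pi>) \<sigma> X Y"
    from cont_inv[OF b(1) assms(2) this] show "cont \<pi> (inv_perm \<sigma>) Y X" .
  qed
  then show ?thesis using e1 e2 by simp
qed

lemma avoiders_sym:
  assumes f: "\<And>\<pi>. \<pi> \<in> perms n \<Longrightarrow> f \<pi> \<in> perms n \<and> f (f \<pi>) = \<pi>"
    and c: "\<And>\<pi>. \<pi> \<in> perms n \<Longrightarrow> contains \<pi> q \<longleftrightarrow> contains (f \<pi>) p"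
  shows "avoiders n q = avoiders n p"
proof -
  have "bij_betw f {\<pi> \<in> perms n. \<not> contains \<pi> q} {\<pi> \<in> perms n. \<not> contains \<pi> p}"
  proof (rule bij_betw_byWitness[where f' = f])
    show "\<forall>a\<in>{\<pi> \<in> perms n. \<not> contains \<pi> q}. f (f a) = a" using f by auto
    show "\<forall>a\<in>{\<pi> \<in> perms n. \<not> contains \<pi> p}. f (f a) = a" using f by auto
    show "f ` {\<pi> \<in> perms n. \<not> contains \<pi> q} \<subseteq> {\<pi> \<in> perms n. \<not> contains \<pi> p}" using f c by auto
    show "f ` {\<pi> \<in> perms n. \<not> contains \<pi> p} \<subseteq> {\<pi> \<in> perms n. \<not> contains \<pi> q}"
    proof
      fix x assume "x \<in> f ` {\<pi> \<in> perms n. \<not> contains \<pi> p}"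
      then obtain \<pi> where "\<pi> \<in> perms n" "\<not> contains \<pi> p" "x = f \<pi>" by blast
      then show "x \<in> {\<pi> \<in> perms n. \<not> contains \<pi> q}" using f[of \<pi>] c[of "f \<pi>"] by auto
    qed
  qed
  then show ?thesis unfolding avoiders_def by (rule bij_betw_same_card)
qed

lemma sym_class_avoiders:
  assumes "q \<in> sym_class p" "is_bvpat p"
  shows "is_bvpat q \<and> avoiders n q = avoiders n p"
  using assms(1)
proof (induction rule: sym_class.induct)
  case base then show ?case using assms(2) by simp
next
  case (inv q)
  have "avoiders n (pat_inv q) = avoiders n q"
    by (rule avoiders_sym[where f = inv_perm])
      (use inv inv_perm_perms inv_perm_inv contains_inv in auto)
  then show ?case using inv bv_inv by simp
next
  case (rev q)
  have "avoiders n (pat_rev q) = avoiders n q"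
    by (rule avoiders_sym[where f = rev])
      (use rev rev_perms contains_rev in auto)
  then show ?case using rev bv_rev by simp
next
  case (compl q)
  have "avoiders n (pat_compl q) = avoiders n q"
    by (rule avoiders_sym[where f = "map (\<lambda>v. Suc n - v)"])
      (use compl compl_perms compl_compl contains_compl in auto)
  then show ?case using compl bv_compl by simp
qed



lemma count_gen:
  assumes srt: "\<And>S. finite S \<Longrightarrow> set (srt S) = S \<and> distinct (srt S) \<and> sorted_wrt R (srt S)"
    and uniq: "\<And>xs. distinct xs \<Longrightarrow> sorted_wrt R xs \<Longrightarrow> srt (set xs) = xs"
    and n: "n \<ge> 1"
  shows "card {\<pi> \<in> perms n. \<forall>m<n. \<pi> ! m = 1 \<longrightarrow> sorted_wrt R (drop (Suc m) \<pi>)}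
       = card {xs. distinct xs \<and> set xs \<subseteq> {2..n}}"
proof -
  let ?A = "{2..n}"
  let ?L = "{xs. distinct xs \<and> set xs \<subseteq> ?A}"
  let ?S = "{\<pi> \<in> perms n. \<forall>m<n. \<pi> ! m = 1 \<longrightarrow> sorted_wrt R (drop (Suc m) \<pi>)}"
  define g where "g = (\<lambda>xs. xs @ [1] @ srt (?A - set xs))"
  define h where "h = (\<lambda>\<pi>::nat list. takeWhile (\<lambda>x. x \<noteq> 1) \<pi>)"
  have gprop: "g xs \<in> ?S \<and> h (g xs) = xs" if xs: "xs \<in> ?L" for xs
  proof -
    have fin: "finite (?A - set xs)" by simp
    note s = srt[OF fin]
    have n1: "1 \<notin> set xs" using xs by auto
    have hg: "h (g xs) = xs" unfolding h_def g_def
      using takeWhile_append2[of xs "\<lambda>x. x \<noteq> 1" "[1] @ srt (?A - set xs)"] n1 by fastforce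
    have setg: "set (g xs) = {1..n}" using s xs n unfolding g_def by auto
    have dg: "distinct (g xs)" using s xs n1 unfolding g_def by auto
    have "card (set (g xs)) = n" using setg by simp
    then have lg: "length (g xs) = n" using dg distinct_card by metis
    have perm: "g xs \<in> perms n" using perms_I[OF lg dg setg] .
    have "\<forall>m<n. g xs ! m = 1 \<longrightarrow> sorted_wrt R (drop (Suc m) (g xs))"
    proof (intro allI impI)
      fix m assume m: "m < n" "g xs ! m = 1"
      have "g xs ! length xs = 1" unfolding g_def by simp
      moreover have "length xs < n" using lg unfolding g_def by simp
      ultimately have "m = length xs" using perms_inj[OF perm m(1), of "length xs"] m(2) by simp
      then have "drop (Suc m) (g xs) = srt (?A - set xs)" unfolding g_def by simp
      then show "sorted_wrt R (drop (Suc m) (g xs))" using s by simp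
    qed
    then show ?thesis using perm hg by simp
  qed
  have hprop: "h \<pi> \<in> ?L \<and> g (h \<pi>) = \<pi>" if pi: "\<pi> \<in> ?S" for \<pi>
  proof -
    have pp: "\<pi> \<in> perms n" using pi by simp
    note D = perms_D[OF pp]
    obtain m where m: "m < n" "\<pi> ! m = 1" using perms_ex[OF pp, of 1] n by auto
    have sd: "sorted_wrt R (drop (Suc m) \<pi>)" using pi m by auto
    have split: "\<pi> = take m \<pi> @ [1] @ drop (Suc m) \<pi>"
      using id_take_nth_drop[of m \<pi>] m D by simp
    have n1: "1 \<notin> set (take m \<pi>)"
    proof
      assume "1 \<in> set (take m \<pi>)"
      then obtain i where i: "i < m" "take m \<pi> ! i = 1" using D m by (auto simp: in_set_conv_nth)
      then have "\<pi> ! i = \<pi> ! m" using m by simp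
      then show False using perms_inj[OF pp, of i m] i m by simp
    qed
    have hp: "h \<pi> = take m \<pi>"
      unfolding h_def
      using takeWhile_append2[of "take m \<pi>" "\<lambda>x. x \<noteq> 1" "[1] @ drop (Suc m) \<pi>"] n1 split[symmetric] by fastforce
    have dist: "distinct (take m \<pi> @ [1] @ drop (Suc m) \<pi>)" using split[symmetric] D by simp
    have setA: "set (take m \<pi>) \<subseteq> ?A"
    proof -
      have "set (take m \<pi>) \<subseteq> {1..n}" using D set_take_subset by metis
      then show ?thesis
      proof (intro subsetI)
        fix x assume "x \<in> set (take m \<pi>)"
        then have "x \<in> {1..n}" "x \<noteq> 1" using \<open>set (take m \<pi>) \<subseteq> {1..n}\<close> n1 by auto
        then show "x \<in> ?A" by auto
      qed
    qed
    have setd: "set (drop (Suc m) \<pi>) = ?A - set (take m \<pi>)"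
    proof -
      have "set (take m \<pi> @ [1] @ drop (Suc m) \<pi>) = {1..n}" using D split[symmetric] by simp
      then have u: "set (take m \<pi>) \<union> {1} \<union> set (drop (Suc m) \<pi>) = {1..n}" by auto
      have "1 \<notin> set (drop (Suc m) \<pi>)" "set (take m \<pi>) \<inter> set (drop (Suc m) \<pi>) = {}" using dist by auto
      show ?thesis
      proof (intro equalityI subsetI)
        fix x assume "x \<in> set (drop (Suc m) \<pi>)"
        then have "x \<in> {1..n}" "x \<noteq> 1" "x \<notin> set (take m \<pi>)"
          using u \<open>1 \<notin> set (drop (Suc m) \<pi>)\<close> \<open>set (take m \<pi>) \<inter> set (drop (Suc m) \<pi>) = {}\<close> by blast+
        then show "x \<in> ?A - set (take m \<pi>)" by auto
      next
        fix x assume "x \<in> ?A - set (take m \<pi>)"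
        then have "x \<in> {1..n}" "x \<noteq> 1" "x \<notin> set (take m \<pi>)" by auto
        then show "x \<in> set (drop (Suc m) \<pi>)" using u by blast
      qed
    qed
    have "srt (?A - set (take m \<pi>)) = drop (Suc m) \<pi>"
      using uniq[OF _ sd] dist setd by simp
    then have "g (h \<pi>) = \<pi>" unfolding hp g_def using split[symmetric] by simp
    moreover have "h \<pi> \<in> ?L" unfolding hp using dist setA by simp
    ultimately show ?thesis by simp
  qed
  have "bij_betw g ?L ?S"
    by (rule bij_betw_byWitness[where f' = h]) (use gprop hprop in auto)
  then show ?thesis by (simp add: bij_betw_same_card)
qed



lemma card_distinct_lists:
  assumes A: "finite A"
  shows "real (card {xs. distinct xs \<and> set xs \<subseteq> A}) = (\<Sum>k = 0..card A. fact (card A) / fact k)"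
proof -
  let ?N = "card A"
  let ?Lj = "\<lambda>j. {xs. length xs = j \<and> distinct xs \<and> set xs \<subseteq> A}"
  have eq: "{xs. distinct xs \<and> set xs \<subseteq> A} = (\<Union>j\<in>{0..?N}. ?Lj j)"
  proof (intro equalityI subsetI)
    fix xs assume "xs \<in> {xs. distinct xs \<and> set xs \<subseteq> A}"
    then have "distinct xs" "set xs \<subseteq> A" by auto
    moreover then have "length xs \<le> ?N" using A by (metis card_mono distinct_card)
    ultimately show "xs \<in> (\<Union>j\<in>{0..?N}. ?Lj j)" by auto
  qed auto
  have fin: "\<forall>j\<in>{0..?N}. finite (?Lj j)"
  proof
    fix j
    have "?Lj j \<subseteq> {xs. set xs \<subseteq> A \<and> length xs = j}" by auto
    then show "finite (?Lj j)" using finite_lists_length_eq[OF A, of j] finite_subset by blast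
  qed
  have "card {xs. distinct xs \<and> set xs \<subseteq> A} = (\<Sum>j = 0..?N. card (?Lj j))"
    unfolding eq by (rule card_UN_disjoint) (use fin in auto)
  also have "\<dots> = (\<Sum>j = 0..?N. fact ?N div fact (?N - j))"
  proof (rule sum.cong)
    fix j assume j: "j \<in> {0..?N}"
    have "card (?Lj j) = \<Prod>{?N - j + 1..?N}" using card_lists_distinct_length_eq[OF A] j by simp
    also have "\<dots> = fact ?N div fact (?N - j)" using fact_div_fact[of "?N - j" ?N] by simp
    finally show "card (?Lj j) = fact ?N div fact (?N - j)" .
  qed simp
  finally have "real (card {xs. distinct xs \<and> set xs \<subseteq> A}) = (\<Sum>j = 0..?N. real (fact ?N div fact (?N - j)))"
    by simp
  also have "\<dots> = (\<Sum>j = 0..?N. fact ?N / fact (?N - j))"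
  proof (rule sum.cong)
    fix j assume j: "j \<in> {0..?N}"
    have "(fact (?N - j) :: nat) dvd fact ?N" by (rule fact_dvd) simp
    then show "real (fact ?N div fact (?N - j)) = fact ?N / fact (?N - j)"
      by (simp add: real_of_nat_div)
  qed simp
  also have "\<dots> = (\<Sum>k = 0..?N. fact ?N / fact k)"
    using sum.atLeastAtMost_rev[of "\<lambda>k. fact ?N / fact k :: real" 0 ?N] by simp
  finally show ?thesis .
qed



lemma smono_steps:
  assumes "\<And>t. t < K \<Longrightarrow> f t < f (Suc t)"
  shows "strict_mono_on {0..K} (f :: nat \<Rightarrow> nat)"
proof (rule strict_mono_onI)
  fix r s assume "r \<in> {0..K}" "s \<in> {0..K}" "r < s"
  then show "f r < f s"
  proof (induction s)
    case 0 then show ?case by simp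
  next
    case (Suc s)
    have st: "f s < f (Suc s)" using assms[of s] Suc.prems by simp
    show ?case
    proof (cases "r = s")
      case True then show ?thesis using st by simp
    next
      case False
      then have "f r < f s" using Suc by auto
      then show ?thesis using st by simp
    qed
  qed
qed

lemma t123: "(t::nat) \<in> {1..3} \<Longrightarrow> t = 1 \<or> t = 2 \<or> t = 3" by auto

lemma cont_char:
  assumes pi: "\<pi> \<in> perms n" and m: "m < n" "\<pi> ! m = 1"
    and s: "(s2 = 2 \<and> s3 = 3) \<or> (s2 = 3 \<and> s3 = (2::nat))" and X: "X \<subseteq> {2}"
  shows "cont \<pi> [1, s2, s3] X {0} \<longleftrightarrow>
    (\<exists>i j. m < i \<and> i < j \<and> j < n \<and> (2 \<in> X \<longrightarrow> j = Suc i) \<and> (\<pi> ! i < \<pi> ! j \<longleftrightarrow> s2 < s3))"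
proof
  have ln: "length \<pi> = n" using perms_D[OF pi] by simp
  assume "cont \<pi> [1, s2, s3] X {0}"
  then obtain a b where oa: "occ n 3 a" and ob: "occ n 3 b"
    and eq: "\<forall>t\<in>{1..3}. \<pi> ! (a t - 1) = b ([1, s2, s3] ! (t - 1))"
    and hX: "\<forall>x\<in>X. a (Suc x) = Suc (a x)" and hY: "b 1 = 1"
    unfolding cont_def ln using occ_def by (auto simp: numeral_3_eq_3)
  have a1: "a 1 \<in> {1..n}" "a 2 \<in> {1..n}" "a 3 \<in> {1..n}" using occ_range[OF oa] by auto
  have lt: "a 1 < a 2" "a 2 < a 3" using occ_less[OF oa] by auto
  have "\<pi> ! (a 1 - 1) = 1" using eq hY by auto
  then have am: "a 1 - 1 = m" using perms_inj[OF pi, of "a 1 - 1" m] a1 m by auto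
  have e2: "\<pi> ! (a 2 - 1) = b s2" using eq by (auto simp: numeral_2_eq_2)
  have e3: "\<pi> ! (a 3 - 1) = b s3" using eq by (auto simp: numeral_3_eq_3)
  have "b s2 < b s3 \<longleftrightarrow> s2 < s3" using occ_less[OF ob, of s2 s3] s by auto
  moreover have "2 \<in> X \<longrightarrow> a 3 = Suc (a 2)" using hX by (auto simp: numeral_3_eq_3 numeral_2_eq_2)
  ultimately show "\<exists>i j. m < i \<and> i < j \<and> j < n \<and> (2 \<in> X \<longrightarrow> j = Suc i) \<and> (\<pi> ! i < \<pi> ! j \<longleftrightarrow> s2 < s3)"
    using e2 e3 a1 lt am by (intro exI[of _ "a 2 - 1"] exI[of _ "a 3 - 1"]) auto
next
  have ln: "length \<pi> = n" using perms_D[OF pi] by simp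
  assume "\<exists>i j. m < i \<and> i < j \<and> j < n \<and> (2 \<in> X \<longrightarrow> j = Suc i) \<and> (\<pi> ! i < \<pi> ! j \<longleftrightarrow> s2 < s3)"
  then obtain i j where ij: "m < i" "i < j" "j < n" "2 \<in> X \<longrightarrow> j = Suc i" "\<pi> ! i < \<pi> ! j \<longleftrightarrow> s2 < s3" by blast
  have vi: "\<pi> ! i \<in> {1..n}" "\<pi> ! j \<in> {1..n}" using perms_nth[OF pi] ij by auto
  have ni: "\<pi> ! i \<noteq> 1" "\<pi> ! j \<noteq> 1" "\<pi> ! i \<noteq> \<pi> ! j"
    using perms_inj[OF pi, of i m] perms_inj[OF pi, of j m] perms_inj[OF pi, of i j] ij m by auto
  define a where "a = (\<lambda>t::nat. if t = 0 then 0 else if t = 1 then Suc m else if t = 2 then Suc i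
      else if t = 3 then Suc j else Suc n)"
  define b where "b = (\<lambda>t::nat. if t = 0 then 0 else if t = 1 then 1 else if t = 4 then Suc n
      else if t = s2 then \<pi> ! i else \<pi> ! j)"
  have oa: "occ n 3 a" unfolding occ_def
  proof (intro conjI)
    show "a 0 = 0" "a (Suc 3) = Suc n" unfolding a_def by auto
    show "strict_mono_on {0..Suc 3} a"
    proof (rule smono_steps)
      fix t :: nat assume "t < Suc 3"
      then have "t = 0 \<or> t = 1 \<or> t = 2 \<or> t = 3" by auto
      then show "a t < a (Suc t)" unfolding a_def using ij by (auto simp: numeral_3_eq_3 numeral_2_eq_2)
    qed
  qed
  have ob: "occ n 3 b" unfolding occ_def
  proof (intro conjI)
    show "b 0 = 0" "b (Suc 3) = Suc n" unfolding b_def by auto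
    show "strict_mono_on {0..Suc 3} b"
    proof (rule smono_steps)
      fix t :: nat assume "t < Suc 3"
      then have "t = 0 \<or> t = 1 \<or> t = 2 \<or> t = 3" by auto
      then show "b t < b (Suc t)" unfolding b_def using s vi ni ij(5)
        by (auto simp: numeral_3_eq_3 numeral_2_eq_2)
    qed
  qed
  have eq: "\<forall>t\<in>{1..3}. \<pi> ! (a t - 1) = b ([1, s2, s3] ! (t - 1))"
  proof
    fix t :: nat assume "t \<in> {1..3}"
    then have "t = 1 \<or> t = 2 \<or> t = 3" by auto
    then show "\<pi> ! (a t - 1) = b ([1, s2, s3] ! (t - 1))" unfolding a_def b_def using s m
      by (auto simp: numeral_3_eq_3 numeral_2_eq_2)
  qed
  have hX: "\<forall>x\<in>X. a (Suc x) = Suc (a x)"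
    using X ij(4) unfolding a_def by (auto simp: numeral_3_eq_3 numeral_2_eq_2)
  have hY: "\<forall>y\<in>{0}. b (Suc y) = Suc (b y)" unfolding b_def using s by auto
  show "cont \<pi> [1, s2, s3] X {0}" unfolding cont_def ln
    by (rule exI[of _ a], rule exI[of _ b]) (use oa ob eq hX hY in \<open>simp add: numeral_3_eq_3\<close>)
qed



lemma drop_all:
  assumes "m < n" "length \<pi> = n"
  shows "sorted_wrt R (drop (Suc m) \<pi>) \<longleftrightarrow> (\<forall>i j. m < i \<longrightarrow> i < j \<longrightarrow> j < n \<longrightarrow> R (\<pi> ! i) (\<pi> ! j))"
proof
  assume s: "sorted_wrt R (drop (Suc m) \<pi>)"
  show "\<forall>i j. m < i \<longrightarrow> i < j \<longrightarrow> j < n \<longrightarrow> R (\<pi> ! i) (\<pi> ! j)"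
  proof (intro allI impI)
    fix i j assume ij: "m < i" "i < j" "j < n"
    have all: "\<And>a b. a < b \<Longrightarrow> b < length (drop (Suc m) \<pi>) \<Longrightarrow> R (drop (Suc m) \<pi> ! a) (drop (Suc m) \<pi> ! b)"
      using s sorted_wrt_iff_nth_less by blast
    have "R (drop (Suc m) \<pi> ! (i - Suc m)) (drop (Suc m) \<pi> ! (j - Suc m))"
      by (rule all) (use ij assms in auto)
    then show "R (\<pi> ! i) (\<pi> ! j)" using ij assms by simp
  qed
next
  assume h: "\<forall>i j. m < i \<longrightarrow> i < j \<longrightarrow> j < n \<longrightarrow> R (\<pi> ! i) (\<pi> ! j)"
  show "sorted_wrt R (drop (Suc m) \<pi>)" unfolding sorted_wrt_iff_nth_less
  proof (intro allI impI)
    fix i j assume ij: "i < j" "j < length (drop (Suc m) \<pi>)"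
    have "R (\<pi> ! (Suc m + i)) (\<pi> ! (Suc m + j))" using h ij assms by auto
    then show "R (drop (Suc m) \<pi> ! i) (drop (Suc m) \<pi> ! j)" using ij assms by simp
  qed
qed

lemma drop_adj:
  assumes "m < n" "length \<pi> = n" "transp R"
  shows "sorted_wrt R (drop (Suc m) \<pi>) \<longleftrightarrow> (\<forall>i. m < i \<longrightarrow> Suc i < n \<longrightarrow> R (\<pi> ! i) (\<pi> ! Suc i))"
proof
  assume s: "sorted_wrt R (drop (Suc m) \<pi>)"
  show "\<forall>i. m < i \<longrightarrow> Suc i < n \<longrightarrow> R (\<pi> ! i) (\<pi> ! Suc i)"
    using s drop_all[OF assms(1,2)] by auto
next
  assume h: "\<forall>i. m < i \<longrightarrow> Suc i < n \<longrightarrow> R (\<pi> ! i) (\<pi> ! Suc i)"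
  show "sorted_wrt R (drop (Suc m) \<pi>)" unfolding sorted_wrt_iff_nth_Suc_transp[OF assms(3)]
  proof (intro allI impI)
    fix i assume i: "Suc i < length (drop (Suc m) \<pi>)"
    have "R (\<pi> ! (Suc m + i)) (\<pi> ! Suc (Suc m + i))" using h i assms by auto
    then show "R (drop (Suc m) \<pi> ! i) (drop (Suc m) \<pi> ! Suc i)" using i assms by simp
  qed
qed

lemma set123: "set [1, s2, s3] = {1..3::nat}" if "(s2 = 2 \<and> s3 = 3) \<or> (s2 = 3 \<and> s3 = (2::nat))"
  using that by (auto simp: numeral_3_eq_3 numeral_2_eq_2)

lemma perm123: "[1, s2, s3] \<in> perms 3" if s: "(s2 = 2 \<and> s3 = 3) \<or> (s2 = 3 \<and> s3 = (2::nat))"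
  by (rule perms_I) (use s set123[OF s] in auto)

lemma avoid_char:
  assumes pi: "\<pi> \<in> perms n" and n: "n \<ge> 1"
    and s: "(s2 = 2 \<and> s3 = 3) \<or> (s2 = 3 \<and> s3 = (2::nat))" and X: "X = {} \<or> X = {2}"
    and R: "R = (if s2 < s3 then (\<lambda>x y. y < x) else (<))"
  shows "\<not> contains \<pi> ([1, s2, s3], X, {0}) \<longleftrightarrow> (\<forall>m<n. \<pi> ! m = 1 \<longrightarrow> sorted_wrt R (drop (Suc m) \<pi>))"
proof -
  have ln: "length \<pi> = n" using perms_D[OF pi] by simp
  obtain m where m: "m < n" "\<pi> ! m = 1" using perms_ex[OF pi, of 1] n by auto
  have uq: "(\<forall>m<n. \<pi> ! m = 1 \<longrightarrow> sorted_wrt R (drop (Suc m) \<pi>)) \<longleftrightarrow> sorted_wrt R (drop (Suc m) \<pi>)"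
    using m perms_inj[OF pi, of _ m] by auto
  have XS: "X \<subseteq> {0..3}" "{0::nat} \<subseteq> {0..3}" "X \<subseteq> {2}" using X by auto
  have c: "contains \<pi> ([1, s2, s3], X, {0}) \<longleftrightarrow>
    (\<exists>i j. m < i \<and> i < j \<and> j < n \<and> (2 \<in> X \<longrightarrow> j = Suc i) \<and> (\<pi> ! i < \<pi> ! j \<longleftrightarrow> s2 < s3))"
    using contains_cont[OF perm123[OF s] pi XS(1,2)] cont_char[OF pi m s XS(3)] by simp
  have Rij: "R (\<pi> ! i) (\<pi> ! j) \<longleftrightarrow> \<not> (\<pi> ! i < \<pi> ! j \<longleftrightarrow> s2 < s3)" if "i < j" "j < n" for i j
  proof -
    have "\<pi> ! i \<noteq> \<pi> ! j" using perms_inj[OF pi, of i j] that by auto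
    then show ?thesis using R s by auto
  qed
  have tr: "transp R" using R by (auto simp: transp_def)
  show ?thesis
  proof (cases "X = {}")
    case True
    then show ?thesis unfolding uq c drop_all[OF m(1) ln] using Rij by auto
  next
    case False
    then have X2: "X = {2}" using X by simp
    have "(\<exists>i j. m < i \<and> i < j \<and> j < n \<and> (2 \<in> X \<longrightarrow> j = Suc i) \<and> (\<pi> ! i < \<pi> ! j \<longleftrightarrow> s2 < s3))
       \<longleftrightarrow> (\<exists>i. m < i \<and> Suc i < n \<and> (\<pi> ! i < \<pi> ! Suc i \<longleftrightarrow> s2 < s3))" using X2 by auto
    then show ?thesis unfolding uq c drop_adj[OF m(1) ln tr] using Rij by auto
  qed
qed

lemma count_seed:
  assumes n: "n \<ge> 1"
    and s: "(s2 = 2 \<and> s3 = 3) \<or> (s2 = 3 \<and> s3 = (2::nat))" and X: "X = {} \<or> X = {2}"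
  shows "real (avoiders n ([1, s2, s3], X, {0})) = (\<Sum>k = 0..n-1. fact (n - 1) / fact k)"
proof -
  define R where "R = (if s2 < s3 then (\<lambda>x y. y < x) else ((<) :: nat \<Rightarrow> nat \<Rightarrow> bool))"
  define srt :: "nat set \<Rightarrow> nat list" where "srt = (if s2 < s3 then (\<lambda>S. rev (sorted_list_of_set S)) else sorted_list_of_set)"
  have srt: "set (srt S) = S \<and> distinct (srt S) \<and> sorted_wrt R (srt S)" if "finite S" for S
    using that unfolding srt_def R_def by (auto simp: sorted_wrt_rev strict_sorted_list_of_set)
  have uniq: "srt (set xs) = xs" if "distinct xs" "sorted_wrt R xs" for xs
  proof (cases "s2 < s3")
    case True
    then have "sorted_wrt (<) (rev xs)" using that R_def by (simp add: sorted_wrt_rev)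
    then have "sorted_list_of_set (set (rev xs)) = rev xs"
      by (intro sorted_distinct_set_unique) (auto simp: strict_sorted_iff)
    then show ?thesis using True srt_def by simp
  next
    case False
    then have "sorted_wrt (<) xs" using that R_def by simp
    then have "sorted_list_of_set (set xs) = xs"
      by (intro sorted_distinct_set_unique) (auto simp: strict_sorted_iff)
    then show ?thesis using False srt_def by simp
  qed
  have "{\<pi> \<in> perms n. \<not> contains \<pi> ([1, s2, s3], X, {0})}
      = {\<pi> \<in> perms n. \<forall>m<n. \<pi> ! m = 1 \<longrightarrow> sorted_wrt R (drop (Suc m) \<pi>)}"
    using avoid_char[OF _ n s X R_def] by blast
  then have "avoiders n ([1, s2, s3], X, {0}) = card {xs. distinct xs \<and> set xs \<subseteq> {2..n}}"
    unfolding avoiders_def using count_gen[OF srt uniq n] by simp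
  moreover have "card {2..n} = n - 1" by simp
  ultimately show ?thesis using card_distinct_lists[of "{2..n}"] by simp
qed



lemma inv_self:
  assumes sig: "\<sigma> \<in> perms k" and h: "\<And>t. t < k \<Longrightarrow> \<sigma> ! (\<sigma> ! t - 1) = Suc t"
  shows "inv_perm \<sigma> = \<sigma>"
proof (rule nth_equalityI)
  have lk: "length \<sigma> = k" using perms_D[OF sig] by simp
  then show "length (inv_perm \<sigma>) = length \<sigma>" by (simp add: inv_perm_len)
  fix s assume "s < length (inv_perm \<sigma>)"
  then have s: "s < k" using lk by (simp add: inv_perm_len)
  define t where "t = \<sigma> ! s - 1"
  have t: "\<sigma> ! s = Suc t" "t < k" using perms_nth[OF sig s] t_def by auto
  have "\<sigma> ! t = Suc s" using h[OF s] t_def by simp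
  then show "inv_perm \<sigma> ! s = \<sigma> ! s" using inv_perm_char[OF sig s t(2)] t(1) by simp
qed

lemma inv123: "inv_perm [1, s2, s3] = [1, s2, s3]" if s: "(s2 = 2 \<and> s3 = 3) \<or> (s2 = 3 \<and> s3 = (2::nat))"
proof (rule inv_self[OF perm123[OF s]])
  fix t :: nat assume "t < 3"
  then have "t = 0 \<or> t = 1 \<or> t = 2" by auto
  then show "[1, s2, s3] ! ([1, s2, s3] ! t - 1) = Suc t" using s by auto
qed

lemma bv123: "is_bvpat ([1, s2, s3], X, Y)"
  if s: "(s2 = 2 \<and> s3 = 3) \<or> (s2 = 3 \<and> s3 = (2::nat))" and "X \<subseteq> {0..3}" "Y \<subseteq> {0..3}"
proof -
  have "length [1, s2, s3] = 3" by simp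
  then show ?thesis unfolding is_bvpat_def prod.case using perm123[OF s] that by metis
qed

theorem mainTheorem9:
  fixes p :: bvpat and n :: nat
  assumes "p \<in> sym_class ([1,2,3], {}, {0}) \<union> sym_class ([1,2,3], {0}, {2})
             \<union> sym_class ([1,3,2], {}, {0}) \<union> sym_class ([1,3,2], {0}, {2})"
    and "n \<ge> 1"
  shows "real (avoiders n p) = (\<Sum>k = 0..n-1. fact (n - 1) / fact k)"
proof -
  have s1: "((2::nat) = 2 \<and> (3::nat) = 3) \<or> ((2::nat) = 3 \<and> (3::nat) = 2)" by simp
  have s2: "((3::nat) = 2 \<and> (2::nat) = 3) \<or> ((3::nat) = 3 \<and> (2::nat) = 2)" by simp
  have X0: "{} = {} \<or> {} = {2::nat}" by simp
  have X2: "{2::nat} = {} \<or> {2::nat} = {2}" by simp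
  consider "p \<in> sym_class ([1,2,3], {}, {0})" | "p \<in> sym_class ([1,2,3], {0}, {2})"
    | "p \<in> sym_class ([1,3,2], {}, {0})" | "p \<in> sym_class ([1,3,2], {0}, {2})" using assms(1) by blast
  then show ?thesis
  proof cases
    case 1
    have "avoiders n p = avoiders n ([1,2,3], {}, {0})"
      using sym_class_avoiders[OF 1 bv123[OF s1]] by simp
    then show ?thesis using count_seed[OF assms(2) s1 X0] by simp
  next
    case 2
    have bv: "is_bvpat ([1,2,3], {0}, {2})" by (rule bv123[OF s1]) auto
    have "avoiders n p = avoiders n ([1,2,3], {0}, {2})"
      using sym_class_avoiders[OF 2 bv] by simp
    also have "\<dots> = avoiders n (pat_inv ([1,2,3], {0}, {2}))"
      using sym_class_avoiders[OF sym_class.inv[OF sym_class.base] bv] by simp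
    also have "pat_inv ([1,2,3], {0}, {2}) = ([1,2,3], {2}, {0})"
      unfolding pat_inv_def using inv123[OF s1] by simp
    finally show ?thesis using count_seed[OF assms(2) s1 X2] by simp
  next
    case 3
    have "avoiders n p = avoiders n ([1,3,2], {}, {0})"
      using sym_class_avoiders[OF 3 bv123[OF s2]] by simp
    then show ?thesis using count_seed[OF assms(2) s2 X0] by simp
  next
    case 4
    have bv: "is_bvpat ([1,3,2], {0}, {2})" by (rule bv123[OF s2]) auto
    have "avoiders n p = avoiders n ([1,3,2], {0}, {2})"
      using sym_class_avoiders[OF 4 bv] by simp
    also have "\<dots> = avoiders n (pat_inv ([1,3,2], {0}, {2}))"
      using sym_class_avoiders[OF sym_class.inv[OF sym_class.base] bv] by simp
    also have "pat_inv ([1,3,2], {0}, {2}) = ([1,3,2], {2}, {0})"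
      unfolding pat_inv_def using inv123[OF s2] by simp
    finally show ?thesis using count_seed[OF assms(2) s2 X2] by simp
  qed
qed


end
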